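(* Suppose $0<1/n\ll\nu,1/k,1/\ell$ and $\nu\ll\alpha,1-\alpha$, where $\alpha\in(0,1)$ and $k\ge2$, $\ell$ are integers. Let $F$ be an $\ell$-vertex $k$-graph and $H$ an $n$-vertex $k$-graph. If $t_{\rm inj}(F,H)=\alpha\pm\nu$, then there exists an $n$-vertex $k$-graph $G$ on $V(H)$ with $t_{\rm inj}(F,G)=\alpha\pm1/n$ and $|G\triangle H|\le\big(\frac{2\nu}{\min\{\alpha,1-\alpha\}}\big)^{1/\ell}\binom nk$.
   Context: Hierarchy convention: a statement asserted for $0<a_1\ll a_2\ll\dots$ means there are non-decreasing functions such that it holds whenever each parameter is at most the corresponding function of the parameters to its right; integer parameters appear as reciprocals. $x=y\pm z$ means $|x-y|\le z$. A $k$-graph is a $k$-uniform hypergraph identified with its edge set. For $k$-graphs $F,H$ with $|V(H)|=n$, $\mathrm{inj}(F,H)$ is the number of injective maps $f:V(F)\to V(H)$ mapping every edge of $F$ onto an edge of $H$, and $t_{\rm inj}(F,H)=\mathrm{inj}(F,H)/(n)_{|V(F)|}$, where $(n)_r=n(n-1)\cdots(n-r+1)$. *)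

theory Defs
  imports "HOL-Library.FuncSet" Complex_Main
begin

definition kgraph :: "nat \<Rightarrow> 'a set \<Rightarrow> 'a set set \<Rightarrow> bool" where
  "kgraph k V E \<longleftrightarrow> finite V \<and> (\<forall>e\<in>E. e \<subseteq> V \<and> card e = k)"

definition falling :: "nat \<Rightarrow> nat \<Rightarrow> nat" where
  "falling n r = (\<Prod>i<r. n - i)"

definition inj_hom :: "'a set \<Rightarrow> 'a set set \<Rightarrow> 'b set \<Rightarrow> 'b set set \<Rightarrow> nat" where
  "inj_hom VF EF VH EH = card {f \<in> VF \<rightarrow>\<^sub>E VH. inj_on f VF \<and> (\<forall>e\<in>EF. f ` e \<in> EH)}"

definition t_inj :: "'a set \<Rightarrow> 'a set set \<Rightarrow> 'b set \<Rightarrow> 'b set set \<Rightarrow> real" where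
  "t_inj VF EF VH EH = real (inj_hom VF EF VH EH) / real (falling (card VH) (card VF))"

end

theory Submission
  imports Defs
begin


definition Inj :: "'a set \<Rightarrow> 'b set \<Rightarrow> ('a \<Rightarrow> 'b) set" where
  "Inj VF V = {f \<in> VF \<rightarrow>\<^sub>E V. inj_on f VF}"

definition homs :: "'a set \<Rightarrow> 'a set set \<Rightarrow> 'b set \<Rightarrow> 'b set set \<Rightarrow> ('a \<Rightarrow> 'b) set" where
  "homs VF EF V G = {f \<in> Inj VF V. \<forall>e\<in>EF. f ` e \<in> G}"

lemma inj_hom_homs: "inj_hom VF EF V G = card (homs VF EF V G)"
  unfolding inj_hom_def homs_def Inj_def by (rule arg_cong[where f=card]) auto

lemma finite_Inj: "finite VF \<Longrightarrow> finite V \<Longrightarrow> finite (Inj VF V)"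
  unfolding Inj_def by (rule finite_subset[OF _ finite_PiE]) auto

lemma finite_homs: "finite VF \<Longrightarrow> finite V \<Longrightarrow> finite (homs VF EF V G)"
  unfolding homs_def by (rule finite_subset[OF _ finite_Inj]) auto

lemma card_Inj: "finite VF \<Longrightarrow> finite V \<Longrightarrow> card (Inj VF V) = falling (card V) (card VF)"
  unfolding Inj_def falling_def
  using card_inj_on_subset_funcset[of VF V VF] by (simp add: atLeast0LessThan)

lemma step_bound:
  assumes fVF: "finite VF" and fV: "finite V" and EF: "\<forall>d\<in>EF. d \<subseteq> VF \<and> card d = k"
    and fEF: "finite EF" and ce: "card e = k" and fe: "finite e"
  shows "card (homs VF EF V (insert e G)) \<le> card (homs VF EF V G) + card EF * (k^k * card V ^ (card VF - k))"
proof -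
  let ?P = "\<lambda>d. PiE VF (\<lambda>x. if x \<in> d then e else V)"
  have sub: "homs VF EF V (insert e G) \<subseteq> homs VF EF V G \<union> (\<Union>d\<in>EF. ?P d)"
  proof
    fix f assume f: "f \<in> homs VF EF V (insert e G)"
    show "f \<in> homs VF EF V G \<union> (\<Union>d\<in>EF. ?P d)"
    proof (cases "\<forall>d\<in>EF. f ` d \<in> G")
      case True then show ?thesis using f unfolding homs_def by auto
    next
      case False
      then obtain d where d: "d \<in> EF" "f ` d = e" using f unfolding homs_def by auto
      have "f \<in> ?P d" using f d unfolding homs_def Inj_def by (auto simp: PiE_iff)
      then show ?thesis using d by auto
    qed
  qed
  have cP: "card (?P d) = k^k * card V ^ (card VF - k)" if "d \<in> EF" for d
  proof -
    have dV: "d \<subseteq> VF" "card d = k" using EF that by auto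
    have "card (?P d) = (\<Prod>x\<in>VF. card (if x \<in> d then e else V))"
      using fVF by (simp add: card_PiE)
    also have "\<dots> = (\<Prod>x\<in>VF - d. card (if x \<in> d then e else V)) * (\<Prod>x\<in>d. card (if x \<in> d then e else V))"
      by (rule prod.subset_diff[OF dV(1) fVF])
    also have "\<dots> = (\<Prod>x\<in>VF - d. card V) * (\<Prod>x\<in>d. card e)"
      by (intro arg_cong2[where f="(*)"] prod.cong) auto
    also have "\<dots> = card V ^ (card VF - k) * k ^ k"
      using dV fVF card_Diff_subset[OF finite_subset[OF dV(1) fVF] dV(1)] by (simp add: ce)
    finally show ?thesis by simp
  qed
  have "card (homs VF EF V (insert e G)) \<le> card (homs VF EF V G \<union> (\<Union>d\<in>EF. ?P d))"
    apply (rule card_mono[OF _ sub])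
    using fVF fV fEF fe by (auto intro!: finite_homs finite_PiE)
  also have "\<dots> \<le> card (homs VF EF V G) + card (\<Union>d\<in>EF. ?P d)" by (rule card_Un_le)
  also have "card (\<Union>d\<in>EF. ?P d) \<le> (\<Sum>d\<in>EF. card (?P d))" by (rule card_UN_le[OF fEF])
  also have "\<dots> = card EF * (k^k * card V ^ (card VF - k))" using cP by simp
  finally show ?thesis by simp
qed

lemma ivt_set:
  fixes g :: "'a set \<Rightarrow> real"
  assumes fS: "finite S" and s: "0 \<le> s" and g0: "g {} \<le> a" and gS: "a \<le> g S"
    and step: "\<And>A e. A \<subseteq> S \<Longrightarrow> e \<in> A \<Longrightarrow> g A \<le> g (A - {e}) + s"
  shows "\<exists>A\<subseteq>S. \<bar>g A - a\<bar> \<le> s"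
proof -
  obtain A where A: "A \<subseteq> S \<and> a \<le> g A" and min: "\<forall>B. B \<subseteq> S \<and> a \<le> g B \<longrightarrow> card A \<le> card B"
    using ex_has_least_nat[of "\<lambda>B. B \<subseteq> S \<and> a \<le> g B" S card] gS by blast
  show ?thesis
  proof (cases "A = {}")
    case True then show ?thesis using A g0 s by (intro exI[of _ A]) auto
  next
    case False
    then obtain e where e: "e \<in> A" by auto
    have fA: "finite A" using A fS finite_subset by blast
    have "card (A - {e}) < card A" by (rule card_Diff1_less[OF fA e])
    then have "g (A - {e}) < a" using min A by (meson not_le order.trans subset_Diff_insert subset_insertI2 Diff_subset)
    moreover have "g A \<le> g (A - {e}) + s" using step A e by blast
    ultimately show ?thesis using A by (intro exI[of _ A]) auto
  qed
qed

lemma count_supsets: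
  assumes fV: "finite V" and B: "B \<subseteq> V" "card B \<le> m"
  shows "card {W. W \<subseteq> V \<and> card W = m \<and> B \<subseteq> W} = (card V - card B) choose (m - card B)"
proof -
  have fB: "finite B" using fV B finite_subset by blast
  have eq: "{W. W \<subseteq> V \<and> card W = m \<and> B \<subseteq> W} = (\<lambda>U. U \<union> B) ` {U. U \<subseteq> V - B \<and> card U = m - card B}"
  proof (rule set_eqI, rule iffI)
    fix W assume W: "W \<in> {W. W \<subseteq> V \<and> card W = m \<and> B \<subseteq> W}"
    have fW: "finite W" using W fV finite_subset by blast
    have "W = (W - B) \<union> B" using W by auto
    moreover have "card (W - B) = m - card B" using W fW by (simp add: card_Diff_subset fB)
    ultimately show "W \<in> (\<lambda>U. U \<union> B) ` {U. U \<subseteq> V - B \<and> card U = m - card B}" using W by blast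
  next
    fix W assume "W \<in> (\<lambda>U. U \<union> B) ` {U. U \<subseteq> V - B \<and> card U = m - card B}"
    then obtain U where U: "U \<subseteq> V - B" "card U = m - card B" "W = U \<union> B" by auto
    have fU: "finite U" using U fV finite_subset by blast
    have "card W = card U + card B" using U fU fB by (subst U(3), subst card_Un_disjoint) auto
    then show "W \<in> {W. W \<subseteq> V \<and> card W = m \<and> B \<subseteq> W}" using U B by auto
  qed
  have inj: "inj_on (\<lambda>U. U \<union> B) {U. U \<subseteq> V - B \<and> card U = m - card B}"
    by (rule inj_onI) blast
  show ?thesis unfolding eq card_image[OF inj]
    using n_subsets[of "V - B" "m - card B"] fV B by (simp add: card_Diff_subset fB)
qed

lemma card_filter_sum: "finite Y \<Longrightarrow> card {f\<in>Y. P f} = (\<Sum>f\<in>Y. if P f then 1 else 0)"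
  by (simp add: sum.If_cases Int_def conj_commute)

lemma averaging:
  assumes fVF: "finite VF" and fV: "finite V" and X: "X \<subseteq> Inj VF V"
    and m: "card VF \<le> m" "m \<le> card V"
  shows "\<exists>W. W \<subseteq> V \<and> card W = m \<and>
    card {f\<in>X. f`VF \<subseteq> W} * falling (card V) (card VF) \<le> card X * falling m (card VF)"
proof -
  define Ws where "Ws = {W. W \<subseteq> V \<and> card W = m}"
  define c where "c = (card V - card VF) choose (m - card VF)"
  have fWs: "finite Ws" unfolding Ws_def using fV by (rule rev_finite_subset[OF finite_Pow_iff[THEN iffD2]]) auto
  have cWs: "card Ws = card V choose m" unfolding Ws_def using n_subsets[OF fV] .
  have sumY: "(\<Sum>W\<in>Ws. card {f\<in>Y. f`VF \<subseteq> W}) = card Y * c" if Y: "Y \<subseteq> Inj VF V" for Y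
  proof -
    have fY: "finite Y" using Y finite_Inj[OF fVF fV] finite_subset by blast
    have "(\<Sum>W\<in>Ws. card {f\<in>Y. f`VF \<subseteq> W}) = (\<Sum>W\<in>Ws. \<Sum>f\<in>Y. if f`VF \<subseteq> W then 1 else 0)"
      using fY by (simp add: card_filter_sum)
    also have "\<dots> = (\<Sum>f\<in>Y. \<Sum>W\<in>Ws. if f`VF \<subseteq> W then 1 else 0)" by (rule sum.swap)
    also have "\<dots> = (\<Sum>f\<in>Y. card {W\<in>Ws. f`VF \<subseteq> W})"
      using fWs by (simp add: card_filter_sum)
    also have "\<dots> = (\<Sum>f\<in>Y. c)"
    proof (rule sum.cong[OF refl])
      fix f assume "f \<in> Y"
      then have f: "f \<in> VF \<rightarrow>\<^sub>E V" "inj_on f VF" using Y unfolding Inj_def by auto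
      have B: "f ` VF \<subseteq> V" "card (f ` VF) = card VF" using f by (auto simp: card_image)
      have "{W\<in>Ws. f`VF \<subseteq> W} = {W. W \<subseteq> V \<and> card W = m \<and> f`VF \<subseteq> W}" unfolding Ws_def by auto
      then show "card {W\<in>Ws. f`VF \<subseteq> W} = c" unfolding c_def
        using count_supsets[OF fV B(1)] B m by simp
    qed
    finally show ?thesis by simp
  qed
  have sumInj: "(\<Sum>W\<in>Ws. card {f\<in>Inj VF V. f`VF \<subseteq> W}) = card Ws * falling m (card VF)"
  proof -
    have "card {f\<in>Inj VF V. f`VF \<subseteq> W} = falling m (card VF)" if "W \<in> Ws" for W
    proof -
      have W: "W \<subseteq> V" "card W = m" using that unfolding Ws_def by auto
      have "{f\<in>Inj VF V. f`VF \<subseteq> W} = Inj VF W" using W unfolding Inj_def by (auto simp: PiE_iff)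
      then show ?thesis using card_Inj[OF fVF finite_subset[OF W(1) fV]] W by simp
    qed
    then show ?thesis by simp
  qed
  define N where "N = falling (card V) (card VF)"
  have NInj: "card (Inj VF V) = N" unfolding N_def by (rule card_Inj[OF fVF fV])
  have key: "N * c = card Ws * falling m (card VF)" using sumY[of "Inj VF V"] sumInj NInj by simp
  show ?thesis
  proof (rule ccontr)
    assume "\<not> ?thesis"
    then have lt: "\<And>W. W \<in> Ws \<Longrightarrow> card X * falling m (card VF) < card {f\<in>X. f`VF \<subseteq> W} * N"
      unfolding Ws_def N_def by (auto simp: not_le)
    have ne: "Ws \<noteq> {}" using cWs m zero_less_binomial[of m "card V"] by auto
    have "(\<Sum>W\<in>Ws. card X * falling m (card VF)) < (\<Sum>W\<in>Ws. card {f\<in>X. f`VF \<subseteq> W} * N)"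
      by (rule sum_strict_mono[OF fWs ne lt])
    also have "\<dots> = card X * c * N" using sumY[OF X] by (simp add: sum_distrib_right[symmetric])
    also have "\<dots> = card X * (N * c)" by simp
    also have "\<dots> = (\<Sum>W\<in>Ws. card X * falling m (card VF))" using key by simp
    finally show False by simp
  qed
qed

lemma Inj_mono: "W \<subseteq> V \<Longrightarrow> Inj VF W \<subseteq> Inj VF V"
  unfolding Inj_def by (auto simp: PiE_iff)

lemma Inj_inter: "W \<subseteq> V \<Longrightarrow> X \<subseteq> Inj VF V \<Longrightarrow> X \<inter> Inj VF W = {f\<in>X. f`VF \<subseteq> W}"
  unfolding Inj_def by (auto simp: PiE_iff)

lemma inc_core:
  assumes fVF: "finite VF" and fV: "finite V" and EF: "\<forall>d\<in>EF. d \<subseteq> VF \<and> card d = k"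
    and W: "W \<subseteq> V"
  shows "card (homs VF EF V H) + falling (card W) (card VF)
     \<le> card (homs VF EF V (H \<union> {e. e \<subseteq> W \<and> card e = k})) + card {f \<in> homs VF EF V H. f`VF \<subseteq> W}"
proof -
  let ?A = "homs VF EF V H" and ?B = "Inj VF W" and ?G = "H \<union> {e. e \<subseteq> W \<and> card e = k}"
  have fW: "finite W" using W fV finite_subset by blast
  have AB: "?A \<union> ?B \<subseteq> homs VF EF V ?G"
  proof
    fix f assume "f \<in> ?A \<union> ?B"
    then show "f \<in> homs VF EF V ?G"
    proof
      assume "f \<in> ?A" then show ?thesis unfolding homs_def by auto
    next
      assume f: "f \<in> ?B"
      have "f`d \<in> ?G" if "d \<in> EF" for d
      proof -
        have "inj_on f d" using f EF that unfolding Inj_def by (auto intro: inj_on_subset)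
        then have "card (f`d) = k" using EF that by (simp add: card_image)
        moreover have "f`d \<subseteq> W" using f EF that unfolding Inj_def by (auto simp: PiE_iff)
        ultimately show ?thesis by auto
      qed
      then show ?thesis using f Inj_mono[OF W] unfolding homs_def by auto
    qed
  qed
  have fA: "finite ?A" by (rule finite_homs[OF fVF fV])
  have fB: "finite ?B" by (rule finite_Inj[OF fVF fW])
  have "card ?A + card ?B = card (?A \<union> ?B) + card (?A \<inter> ?B)" by (rule card_Un_Int[OF fA fB])
  also have "card (?A \<union> ?B) \<le> card (homs VF EF V ?G)" by (rule card_mono[OF finite_homs[OF fVF fV] AB])
  also have "?A \<inter> ?B = {f \<in> ?A. f`VF \<subseteq> W}" by (rule Inj_inter[OF W]) (auto simp: homs_def)
  finally show ?thesis using card_Inj[OF fVF fW] by simp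
qed

lemma dec_core:
  assumes fVF: "finite VF" and fV: "finite V" and EF: "\<forall>d\<in>EF. d \<subseteq> VF \<and> card d = k"
    and W: "W \<subseteq> V" and ne: "EF \<noteq> {}"
  shows "card (Inj VF V - homs VF EF V H) + falling (card W) (card VF)
     \<le> card (Inj VF V - homs VF EF V (H - {e. e \<subseteq> W \<and> card e = k})) + card {f \<in> Inj VF V - homs VF EF V H. f`VF \<subseteq> W}"
proof -
  let ?A = "Inj VF V - homs VF EF V H" and ?B = "Inj VF W" and ?G = "H - {e. e \<subseteq> W \<and> card e = k}"
  have fW: "finite W" using W fV finite_subset by blast
  obtain d0 where d0: "d0 \<in> EF" using ne by auto
  have AB: "?A \<union> ?B \<subseteq> Inj VF V - homs VF EF V ?G"
  proof
    fix f assume "f \<in> ?A \<union> ?B"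
    then show "f \<in> Inj VF V - homs VF EF V ?G"
    proof
      assume "f \<in> ?A" then show ?thesis unfolding homs_def by auto
    next
      assume f: "f \<in> ?B"
      have "inj_on f d0" using f EF d0 unfolding Inj_def by (auto intro: inj_on_subset)
      then have "card (f`d0) = k" using EF d0 by (simp add: card_image)
      moreover have "f`d0 \<subseteq> W" using f EF d0 unfolding Inj_def by (auto simp: PiE_iff)
      ultimately have "f`d0 \<notin> ?G" by auto
      then show ?thesis using f Inj_mono[OF W] d0 unfolding homs_def by auto
    qed
  qed
  have fA: "finite ?A" using finite_Inj[OF fVF fV] by auto
  have fB: "finite ?B" by (rule finite_Inj[OF fVF fW])
  have "card ?A + card ?B = card (?A \<union> ?B) + card (?A \<inter> ?B)" by (rule card_Un_Int[OF fA fB])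
  also have "card (?A \<union> ?B) \<le> card (Inj VF V - homs VF EF V ?G)"
    by (rule card_mono[OF _ AB]) (use finite_Inj[OF fVF fV] in auto)
  also have "?A \<inter> ?B = {f \<in> ?A. f`VF \<subseteq> W}" by (rule Inj_inter[OF W]) auto
  finally show ?thesis using card_Inj[OF fVF fW] by simp
qed

lemma card_nonhoms: "finite VF \<Longrightarrow> finite V \<Longrightarrow>
   card (Inj VF V - homs VF EF V G) = card (Inj VF V) - card (homs VF EF V G)"
  by (rule card_Diff_subset) (use finite_homs[of VF V EF G] in \<open>auto simp: homs_def\<close>)

lemma homs_le: "finite VF \<Longrightarrow> finite V \<Longrightarrow> card (homs VF EF V G) \<le> card (Inj VF V)"
  by (rule card_mono[OF finite_Inj]) (auto simp: homs_def)

lemma falling_ge: "l \<le> m \<Longrightarrow> (m - l)^l \<le> falling m l"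
  unfolding falling_def using prod_mono[of "{..<l}" "\<lambda>_. m - l" "\<lambda>i. m - i"] by auto

lemma falling_le: "falling m l \<le> m^l"
  unfolding falling_def using prod_mono[of "{..<l}" "\<lambda>i. m - i" "\<lambda>_. m"] by auto

lemma bernoulli: "0 \<le> (x::real) \<Longrightarrow> x \<le> 1 \<Longrightarrow> 1 - real l * x \<le> (1 - x)^l"
proof (induction l)
  case (Suc l)
  have "1 - real (Suc l) * x \<le> (1 - real l * x) * (1 - x)" using Suc.prems by (simp add: algebra_simps)
  also have "\<dots> \<le> (1 - x)^l * (1 - x)" using Suc by (intro mult_right_mono) auto
  finally show ?case by (simp add: mult.commute)
qed simp

lemma binom_ratio: "0 < k \<Longrightarrow> m \<le> n \<Longrightarrow> n * (m choose k) \<le> m * (n choose k)"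
proof -
  assume k: "0 < k" and mn: "m \<le> n"
  have "k * (n * (m choose k)) = n * (m * ((m - 1) choose (k - 1)))"
    using times_binomial_minus1_eq[OF k, of m] by simp
  also have "\<dots> \<le> n * (m * ((n - 1) choose (k - 1)))"
    using binomial_right_mono[of "m - 1" "n - 1"] mn by simp
  also have "\<dots> = k * (m * (n choose k))"
    using times_binomial_minus1_eq[OF k, of n] by simp
  finally show ?thesis using k by simp
qed




lemma t_inj_homs: "t_inj VF EF V G = real (card (homs VF EF V G)) / real (falling (card V) (card VF))"
  unfolding t_inj_def inj_hom_homs ..

lemma inc_real:
  fixes h p x c N a \<nu> :: real
  assumes hp: "h + p \<le> c + x" and xN: "x * N \<le> h * p" and N: "N > 0" and ha: "h / N \<le> a"
    and lo: "a - \<nu> \<le> h / N" and nu: "\<nu> \<le> p / N * (1 - a)" and p: "0 \<le> p"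
  shows "a \<le> c / N"
proof -
  have 1: "h/N + p/N \<le> c/N + x/N" using hp N by (simp add: add_divide_distrib[symmetric] divide_right_mono)
  have "x/N = (x*N)/(N*N)" using N by simp
  also have "\<dots> \<le> (h*p)/(N*N)" by (rule divide_right_mono) (use xN N in auto)
  finally have 2: "x/N \<le> (h/N)*(p/N)" by simp
  have 3: "(p/N)*(1-a) \<le> (p/N)*(1-h/N)" using ha p N by (intro mult_left_mono) auto
  show ?thesis using 1 2 3 lo nu by (simp add: algebra_simps)
qed

lemma dec_real:
  fixes h p x c N a \<nu> :: real
  assumes hp: "(N - h) + p \<le> (N - c) + x" and xN: "x * N \<le> (N - h) * p" and N: "N > 0" and ha: "a \<le> h / N"
    and lo: "h / N \<le> a + \<nu>" and nu: "\<nu> \<le> p / N * a" and p: "0 \<le> p"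
  shows "c / N \<le> a"
proof -
  have 1: "(N-h)/N + p/N \<le> (N-c)/N + x/N" using hp N by (simp add: add_divide_distrib[symmetric] divide_right_mono)
  have "x/N = (x*N)/(N*N)" using N by simp
  also have "\<dots> \<le> ((N-h)*p)/(N*N)" by (rule divide_right_mono) (use xN N in auto)
  finally have 2: "x/N \<le> ((N-h)/N)*(p/N)" by simp
  have 3: "(p/N)*a \<le> (p/N)*(h/N)" using ha p N by (intro mult_left_mono) auto
  have e1: "(N-h)/N = 1 - h/N" "(N-c)/N = 1 - c/N" using N by (auto simp: field_simps)
  show ?thesis using 1 2 3 lo nu unfolding e1 by (simp add: algebra_simps)
qed

lemma core:
  fixes \<alpha> \<nu> :: real
  assumes kF: "kgraph k VF EF" and kH: "kgraph k V H" and ne: "EF \<noteq> {}"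
    and a: "0 < \<alpha>" "\<alpha> < 1" and tH: "\<bar>t_inj VF EF V H - \<alpha>\<bar> \<le> \<nu>"
    and mn: "m \<le> card V" "card VF \<le> m" and Vpos: "0 < card V"
    and step: "real (card EF * (k^k * card V^(card VF - k))) * real (card V) \<le> real (falling (card V) (card VF))"
    and Npos: "0 < falling (card V) (card VF)"
    and q: "\<nu> \<le> real (falling m (card VF)) / real (falling (card V) (card VF)) * min \<alpha> (1-\<alpha>)"
  shows "\<exists>G. kgraph k V G \<and> \<bar>t_inj VF EF V G - \<alpha>\<bar> \<le> 1 / real (card V) \<and>
     card (G - H \<union> (H - G)) \<le> m choose k"
proof -
  have fVF: "finite VF" and EF: "\<forall>d\<in>EF. d \<subseteq> VF \<and> card d = k" using kF unfolding kgraph_def by auto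
  have fEF: "finite EF" using EF fVF by (meson Pow_iff finite_Pow_iff rev_finite_subset subsetI)
  have fV: "finite V" and Hs: "\<forall>e\<in>H. e \<subseteq> V \<and> card e = k" using kH unfolding kgraph_def by auto
  define N where "N = falling (card V) (card VF)"
  define D where "D = card EF * (k^k * card V^(card VF - k))"
  define t where "t G = real (card (homs VF EF V G)) / real N" for G
  have tt: "t_inj VF EF V G = t G" for G by (simp add: t_def N_def t_inj_homs)
  have NP: "0 < real N" using Npos N_def by simp
  have sN: "real D / real N \<le> 1 / real (card V)"
    using step NP Vpos unfolding D_def N_def by (simp add: divide_simps mult.commute)
  have s0: "0 \<le> real D / real N" by simp
  have stepG: "t (insert e G) \<le> t G + real D / real N" if "e \<subseteq> V" "card e = k" for G e
  proof -
    have "card (homs VF EF V (insert e G)) \<le> card (homs VF EF V G) + D"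
      unfolding D_def by (rule step_bound[OF fVF fV EF fEF that(2) finite_subset[OF that(1) fV]])
    then have "real (card (homs VF EF V (insert e G))) \<le> real (card (homs VF EF V G)) + real D" by linarith
    then show ?thesis unfolding t_def using NP by (simp add: add_divide_distrib[symmetric] divide_right_mono)
  qed
  have hN: "card (homs VF EF V G) \<le> N" for G using homs_le[OF fVF fV] card_Inj[OF fVF fV] N_def by simp
  have qm: "\<nu> \<le> real (falling m (card VF)) / real N * (1 - \<alpha>)" "\<nu> \<le> real (falling m (card VF)) / real N * \<alpha>"
  proof -
    have "0 \<le> real (falling m (card VF)) / real N" by simp
    then show "\<nu> \<le> real (falling m (card VF)) / real N * (1 - \<alpha>)" "\<nu> \<le> real (falling m (card VF)) / real N * \<alpha>"
      using q unfolding N_def[symmetric]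
      by (meson min.cobounded1 min.cobounded2 mult_left_mono order_trans)+
  qed
  show ?thesis
  proof (cases "t H \<le> \<alpha>")
    case True
    obtain W where W: "W \<subseteq> V" "card W = m" and
      Wx: "card {f\<in>homs VF EF V H. f`VF \<subseteq> W} * N \<le> card (homs VF EF V H) * falling m (card VF)"
      using averaging[OF fVF fV _ mn(2) mn(1), of "homs VF EF V H"] unfolding N_def
      by (auto simp: homs_def)
    define K where "K = {e. e \<subseteq> W \<and> card e = k}"
    have fW: "finite W" using W fV finite_subset by blast
    have fK: "finite K" unfolding K_def using fW by (rule rev_finite_subset[OF finite_Pow_iff[THEN iffD2]]) auto
    have cK: "card K = m choose k" unfolding K_def using n_subsets[OF fW] W by simp
    have endp: "\<alpha> \<le> t (H \<union> K)"
    proof -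
      have c1: "card (homs VF EF V H) + falling m (card VF)
        \<le> card (homs VF EF V (H \<union> K)) + card {f \<in> homs VF EF V H. f`VF \<subseteq> W}"
        using inc_core[OF fVF fV EF W(1), of H] W K_def by simp
      show ?thesis unfolding t_def
        apply (rule inc_real[where h="real (card (homs VF EF V H))" and p="real (falling m (card VF))"
              and x="real (card {f \<in> homs VF EF V H. f`VF \<subseteq> W})" and \<nu>=\<nu>])
        subgoal using c1 by (simp only: of_nat_add[symmetric] of_nat_le_iff)
        subgoal using Wx by (simp only: of_nat_mult[symmetric] of_nat_le_iff)
        subgoal using NP by simp
        subgoal using True by (simp add: t_def)
        subgoal using tH tt[of H] unfolding t_def by linarith
        subgoal using qm by simp
        subgoal by simp
        done
    qed
    obtain A where A: "A \<subseteq> K - H" "\<bar>t (H \<union> A) - \<alpha>\<bar> \<le> real D / real N"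
    proof -
      have "\<exists>A\<subseteq>K - H. \<bar>t (H \<union> A) - \<alpha>\<bar> \<le> real D / real N"
      proof (rule ivt_set[where g="\<lambda>A. t (H \<union> A)"])
        show "finite (K - H)" using fK by simp
        show "t (H \<union> {}) \<le> \<alpha>" using True by simp
        show "\<alpha> \<le> t (H \<union> (K - H))" using endp by (simp add: Un_Diff_cancel)
        fix A e assume Ae: "A \<subseteq> K - H" "e \<in> A"
        then have "H \<union> A = insert e (H \<union> (A - {e}))" by auto
        moreover have eK: "e \<in> K" using Ae by auto
        moreover have "e \<subseteq> V" "card e = k" using eK W(1) unfolding K_def by auto
        ultimately show "t (H \<union> A) \<le> t (H \<union> (A - {e})) + real D / real N" using stepG by simp
      qed (rule s0)
      then show ?thesis using that by blast
    qed
    show ?thesis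
    proof (intro exI conjI)
      show "kgraph k V (H \<union> A)" using Hs A(1) W(1) fV unfolding kgraph_def K_def by blast
      show "\<bar>t_inj VF EF V (H \<union> A) - \<alpha>\<bar> \<le> 1 / real (card V)" using A sN tt by force
      have "H \<union> A - H \<union> (H - (H \<union> A)) = A" using A by auto
      moreover have "card A \<le> card K" using A fK by (meson card_mono Diff_subset order_trans)
      ultimately show "card (H \<union> A - H \<union> (H - (H \<union> A))) \<le> m choose k" using cK by simp
    qed
  next
    case False
    let ?X = "Inj VF V - homs VF EF V H"
    obtain W where W: "W \<subseteq> V" "card W = m" and
      Wx: "card {f\<in>?X. f`VF \<subseteq> W} * N \<le> card ?X * falling m (card VF)"
      using averaging[OF fVF fV _ mn(2) mn(1), of ?X] unfolding N_def by auto
    define K where "K = {e. e \<subseteq> W \<and> card e = k}"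
    have fW: "finite W" using W fV finite_subset by blast
    have fK: "finite K" unfolding K_def using fW by (rule rev_finite_subset[OF finite_Pow_iff[THEN iffD2]]) auto
    have cK: "card K = m choose k" unfolding K_def using n_subsets[OF fW] W by simp
    have cX: "card (Inj VF V - homs VF EF V G) = N - card (homs VF EF V G)" for G
      using card_nonhoms[OF fVF fV] card_Inj[OF fVF fV] N_def by simp
    have rX: "real (card (Inj VF V - homs VF EF V G)) = real N - real (card (homs VF EF V G))" for G
      using cX[of G] hN[of G] by simp
    have endp: "t (H - K) \<le> \<alpha>"
    proof -
      have c1: "card ?X + falling m (card VF)
        \<le> card (Inj VF V - homs VF EF V (H - K)) + card {f \<in> ?X. f`VF \<subseteq> W}"
        using dec_core[OF fVF fV EF W(1) ne, of H] W K_def by simp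
      show ?thesis unfolding t_def
        apply (rule dec_real[where h="real (card (homs VF EF V H))" and p="real (falling m (card VF))"
              and x="real (card {f \<in> ?X. f`VF \<subseteq> W})" and \<nu>=\<nu> and N="real N"])
        subgoal using c1 rX[of H] rX[of "H - K"]
          by (simp only: of_nat_add[symmetric] of_nat_le_iff[symmetric])
        subgoal proof -
          have "real (card {f \<in> ?X. f`VF \<subseteq> W} * N) \<le> real (card ?X * falling m (card VF))"
            using Wx by (simp only: of_nat_le_iff)
          then show ?thesis using rX[of H] by simp
        qed
        subgoal using NP by simp
        subgoal using False by (simp add: t_def)
        subgoal using tH tt[of H] unfolding t_def by linarith
        subgoal using qm by simp
        subgoal by simp
        done
    qed
    obtain A where A: "A \<subseteq> H \<inter> K" "\<bar>- t (H - A) - - \<alpha>\<bar> \<le> real D / real N"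
    proof -
      have "\<exists>A\<subseteq>H \<inter> K. \<bar>- t (H - A) - - \<alpha>\<bar> \<le> real D / real N"
      proof (rule ivt_set[where g="\<lambda>A. - t (H - A)"])
        show "finite (H \<inter> K)" using fK by simp
        show "- t (H - {}) \<le> - \<alpha>" using False by simp
        have "H - H \<inter> K = H - K" by auto
        then show "- \<alpha> \<le> - t (H - H \<inter> K)" using endp by simp
        fix A e assume Ae: "A \<subseteq> H \<inter> K" "e \<in> A"
        then have "H - (A - {e}) = insert e (H - A)" by auto
        moreover have eK: "e \<in> K" using Ae by auto
        moreover have "e \<subseteq> V" "card e = k" using eK W(1) unfolding K_def by auto
        ultimately show "- t (H - A) \<le> - t (H - (A - {e})) + real D / real N" using stepG[of e "H - A"] by simp
      qed (rule s0)
      then show ?thesis using that by blast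
    qed
    show ?thesis
    proof (intro exI conjI)
      show "kgraph k V (H - A)" using Hs fV unfolding kgraph_def by auto
      show "\<bar>t_inj VF EF V (H - A) - \<alpha>\<bar> \<le> 1 / real (card V)" using A sN tt by force
      have "(H - A) - H \<union> (H - (H - A)) = A" using A by auto
      moreover have "card A \<le> card K" using A fK by (meson card_mono Int_lower2 order_trans)
      ultimately show "card ((H - A) - H \<union> (H - (H - A))) \<le> m choose k" using cK by simp
    qed
  qed
qed




lemma kk_bound: "2 \<le> k \<Longrightarrow> k \<le> l \<Longrightarrow> l \<le> (n::nat) \<Longrightarrow> k^k * n^(l-k) \<le> l^2 * n^(l-2)"
proof -
  assume a: "2 \<le> k" "k \<le> l" "l \<le> n"
  have "k^k \<le> l^k" using a by (simp add: power_mono)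
  also have "l^k = l^2 * l^(k-2)" using a by (metis le_add_diff_inverse power_add)
  also have "l^(k-2) \<le> n^(k-2)" using a by (simp add: power_mono)
  finally have "k^k * n^(l-k) \<le> l^2 * n^(k-2) * n^(l-k)" by (simp add: mult_right_mono)
  also have "\<dots> = l^2 * n^(l-2)" proof -
    have "k - 2 + (l - k) = l - 2" using a by simp
    then show ?thesis by (metis power_add mult.assoc)
  qed
  finally show ?thesis .
qed

lemma falling_pos: "l \<le> n \<Longrightarrow> 0 < falling n l"
  unfolding falling_def by (rule prod_pos) auto

lemma falling_lower:
  fixes n l :: nat
  assumes "l \<le> n" "2 * real l ^ 2 \<le> real n" "0 < n"
  shows "real n ^ l / 2 \<le> real (falling n l)"
proof -
  have n0: "0 < real n" using assms by simp
  have x: "0 \<le> real l / real n" "real l / real n \<le> 1" using assms n0 by auto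
  have "real n ^ l / 2 \<le> real n ^ l * (1 - real l * (real l / real n))"
  proof -
    have "real l * (real l / real n) \<le> 1/2" using assms n0 by (simp add: field_simps power2_eq_square)
    then have "1/2 \<le> 1 - real l * (real l / real n)" by simp
    from mult_left_mono[OF this, of "real n ^ l"] show ?thesis by simp
  qed
  also have "\<dots> \<le> real n ^ l * (1 - real l / real n) ^ l"
    using bernoulli[OF x] n0 by (intro mult_left_mono) auto
  also have "\<dots> = (real n - real l) ^ l" using n0 by (simp add: power_mult_distrib[symmetric] field_simps)
  also have "\<dots> = real ((n - l) ^ l)" using assms by simp
  also have "\<dots> \<le> real (falling n l)" using falling_ge[OF assms(1)] by linarith
  finally show ?thesis .
qed




lemma main:
  fixes \<alpha> \<nu> :: real and k l n :: nat and VF :: "nat set" and EF V H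
  assumes a: "0 < \<alpha>" "\<alpha> < 1" and k2: "2 \<le> k" and l1: "1 \<le> l" and n0: "0 < n" and nu0: "0 < \<nu>"
    and nu: "\<nu> \<le> min \<alpha> (1 - \<alpha>) / 4"
    and nbig: "1 / real n \<le> min \<nu> 1 * (min (1 / real l) 1)^2 * 2 powr (- 1 / min (1 / real l) 1) / 8"
    and kF: "kgraph k VF EF" and cVF: "card VF = l" and kH: "kgraph k V H" and cV: "card V = n"
    and tH: "\<bar>t_inj VF EF V H - \<alpha>\<bar> \<le> \<nu>"
  shows "\<exists>G. kgraph k V G \<and> \<bar>t_inj VF EF V G - \<alpha>\<bar> \<le> 1 / real n \<and>
            real (card (G - H \<union> (H - G)))
              \<le> (2 * \<nu> / min \<alpha> (1 - \<alpha>)) powr (1 / real l) * real (n choose k)"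
proof -
  define \<mu> where "\<mu> = min \<alpha> (1 - \<alpha>)"
  have numu: "\<nu> \<le> \<mu> / 4" using nu unfolding \<mu>_def .
  have mu: "0 < \<mu>" "\<mu> \<le> 1/2" "\<mu> \<le> \<alpha>" "\<mu> \<le> 1 - \<alpha>" using a unfolding \<mu>_def by (auto simp: min_def)
  have "min \<alpha> (1 - \<alpha>) / 4 \<le> 1/8" using mu(2) unfolding \<mu>_def by simp
  then have nu8: "\<nu> \<le> 1/8" using nu by linarith
  have lpos: "0 < real l" using l1 by simp
  have ml: "min (1 / real l) 1 = 1 / real l" using l1 by simp
  have p2: "2 powr (- 1 / (1 / real l)) = 1 / 2^l"
    using powr_minus_divide[of 2 "real l"] powr_realpow[of 2 l] lpos by simp
  have "1 / real n \<le> \<nu> * (1 / real l)^2 * (1 / 2^l) / 8"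
    using nbig unfolding ml p2 using nu8 by simp
  then have B: "8 * real l^2 * 2^l \<le> \<nu> * real n" using n0 lpos
    by (simp add: field_simps)
  have twol: "1 \<le> (2::real)^l" by simp
  have nB: "64 * real l^2 * 2^l \<le> real n"
  proof -
    have "\<nu> * real n \<le> real n / 8" using nu8 n0 by (simp add: mult_right_mono)
    then show ?thesis using B by linarith
  qed
  have l2n: "real l \<le> real l^2" using l1 by (simp add: power2_eq_square)
  have L1: "real l^2 * 1 \<le> real l^2 * 2^l" by (rule mult_left_mono[OF twol]) simp
  have nl: "l \<le> n"
  proof -
    have "real l \<le> 64 * real l^2 * 2^l" using l2n L1 by linarith
    then show ?thesis using nB by simp
  qed
  define N where "N = falling n l"
  have Npos: "0 < N" unfolding N_def by (rule falling_pos[OF nl])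
  have fVF: "finite VF" and EF: "\<forall>d\<in>EF. d \<subseteq> VF \<and> card d = k" using kF unfolding kgraph_def by auto
  have fV: "finite V" using kH unfolding kgraph_def by auto
  show ?thesis
  proof (cases "EF = {}")
    case True
    have "homs VF EF V H = Inj VF V" using True unfolding homs_def by auto
    then have "t_inj VF EF V H = 1" using Npos card_Inj[OF fVF fV] cVF cV
      unfolding t_inj_homs N_def by simp
    then have False using tH numu mu by linarith
    then show ?thesis ..
  next
    case False
    then obtain d where d: "d \<in> EF" by auto
    have kl: "k \<le> l" using EF d cVF card_mono[OF fVF] by auto
    define y where "y = 2 * \<nu> / \<mu>"
    have y3: "\<nu> * (4 * \<mu>) \<le> \<nu> * 2" using mu nu0 by (intro mult_left_mono) auto
    have y: "0 < y" "y \<le> 1/2" "4 * \<nu> \<le> y" using nu0 mu numu y3 unfolding y_def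
      by (auto simp: field_simps)
    define \<delta> where "\<delta> = y powr (1 / real l)"
    have dpos: "0 < \<delta>" using y unfolding \<delta>_def by simp
    have d1: "\<delta> \<le> 1" unfolding \<delta>_def using y by (intro powr_le1) auto
    have dy: "y \<le> \<delta>" unfolding \<delta>_def using powr_mono'[of "1 / real l" 1 y] y l1 by simp
    have dl: "\<delta> ^ l = y"
    proof -
      have "\<delta> ^ l = \<delta> powr real l" using dpos by (simp add: powr_realpow)
      also have "\<dots> = y" unfolding \<delta>_def powr_powr using lpos y by simp
      finally show ?thesis .
    qed
    define m where "m = nat \<lfloor>\<delta> * real n\<rfloor>"
    have mreal: "real m = of_int \<lfloor>\<delta> * real n\<rfloor>" unfolding m_def using dpos
      by (intro of_nat_nat) simp
    have m1: "real m \<le> \<delta> * real n" "\<delta> * real n - 1 < real m" unfolding mreal by auto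
    have mn: "m \<le> n"
    proof -
      have "\<delta> * real n \<le> real n" using d1 n0 by (simp add: mult_left_le_one_le)
      then show ?thesis using m1 by simp
    qed
    have dn: "32 * real l^2 * 2^l \<le> \<delta> * real n"
    proof -
      have "4 * \<nu> * real n \<le> \<delta> * real n" using y dy by (intro mult_right_mono) auto
      then show ?thesis using B by linarith
    qed
    have lm: "l \<le> m"
    proof -
      have "real l + 1 \<le> 32 * real l^2 * 2^l" using l2n L1 l1 by linarith
      then show ?thesis using dn m1 by simp
    qed
    have step: "real (card EF * (k^k * card V^(card VF - k))) * real (card V) \<le> real (falling (card V) (card VF))"
    proof -
      have cEF: "card EF \<le> 2^l"
      proof -
        have "EF \<subseteq> Pow VF" using EF by auto
        then have "card EF \<le> card (Pow VF)" using fVF by (intro card_mono) auto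
        then show ?thesis using card_Pow[of VF] cVF fVF by simp
      qed
      have "card EF * (k^k * n^(l-k)) \<le> 2^l * (l^2 * n^(l-2))"
        using cEF kk_bound[OF k2 kl nl] by (rule mult_le_mono)
      then have "real (card EF * (k^k * n^(l-k))) \<le> real (2^l * (l^2 * n^(l-2)))"
        by (simp only: of_nat_le_iff)
      then have r1: "real (card EF * (k^k * n^(l-k))) \<le> 2^l * (real l^2 * real n^(l-2))"
        by simp
      define P where "P = real n ^ (l - 2)"
      have P0: "0 \<le> P" unfolding P_def by simp
      have l2: "2 \<le> l" using k2 kl by simp
      have nl2: "real n ^ l = P * real n * real n" unfolding P_def
      proof -
        have "l = (l - 2) + 1 + 1" using l2 by simp
        then show "real n ^ l = real n ^ (l - 2) * real n * real n" by (metis power_add power_one_right)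
      qed
      have fl: "real n ^ l / 2 \<le> real N" unfolding N_def
        using falling_lower[OF nl _ n0] nB L1 by linarith
      have "real (card EF * (k^k * n^(l-k))) * real n \<le> 2^l * (real l^2 * P) * real n"
        using r1 n0 unfolding P_def by (intro mult_right_mono) auto
      also have "\<dots> = (2^l * real l^2) * (P * real n)" by simp
      also have "\<dots> \<le> (real n / 2) * (P * real n)"
      proof (rule mult_right_mono)
        show "2 ^ l * (real l)\<^sup>2 \<le> real n / 2" using nB by (simp add: mult.commute)
      qed (use P0 n0 in simp)
      also have "\<dots> = real n ^ l / 2" unfolding nl2 by simp
      also have "\<dots> \<le> real N" by (rule fl)
      finally show ?thesis unfolding N_def cVF cV .
    qed
    have q: "\<nu> \<le> real (falling m (card VF)) / real (falling (card V) (card VF)) * min \<alpha> (1-\<alpha>)"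
    proof -
      define x where "x = (real l + 1) / (\<delta> * real n)"
      have dnp: "0 < \<delta> * real n" using dpos n0 by simp
      have lx: "real l * x \<le> 1/2"
      proof -
        have "2 * (real l * (real l + 1)) \<le> \<delta> * real n"
        proof -
          have "2 * (real l * (real l + 1)) = 2 * real l^2 + 2 * real l" by (simp add: power2_eq_square algebra_simps)
          then show ?thesis using dn l2n L1 by linarith
        qed
        then show ?thesis unfolding x_def using dnp by (simp add: field_simps)
      qed
      have l1n: "real l + 1 \<le> \<delta> * real n" using dn l2n L1 l1 by linarith
      have x01: "0 \<le> x" "x \<le> 1" using l1n dnp unfolding x_def
        by (auto simp: field_simps) 
      have e1: "\<delta> * real n * (1 - x) = \<delta> * real n - real l - 1"
      proof -
        have "\<delta> * real n * x = real l + 1" unfolding x_def using dnp dpos n0 by simp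
        then show ?thesis by (simp add: algebra_simps)
      qed
      have "y * real n ^ l / 2 \<le> y * real n ^ l * (1 - real l * x)"
      proof -
        have "1/2 \<le> 1 - real l * x" using lx by simp
        from mult_left_mono[OF this, of "y * real n ^ l"] y show ?thesis by simp
      qed
      also have "\<dots> \<le> y * real n ^ l * (1 - x) ^ l"
        using bernoulli[OF x01] y by (intro mult_left_mono) auto
      also have "\<dots> = (\<delta> * real n * (1 - x)) ^ l" using dl by (simp add: power_mult_distrib)
      also have "\<dots> \<le> (real m - real l) ^ l"
        unfolding e1 using m1 l1n by (intro power_mono) auto
      also have "\<dots> = real ((m - l) ^ l)" using lm by simp
      also have "\<dots> \<le> real (falling m l)" using falling_ge[OF lm] by linarith
      finally have fm: "y * real n ^ l / 2 \<le> real (falling m l)" .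
      have Nle: "real N \<le> real n ^ l" unfolding N_def using falling_le[of n l] by (simp flip: of_nat_power)
      have "y / 2 = (y * real n ^ l / 2) / real n ^ l" using n0 by simp
      also have "\<dots> \<le> real (falling m l) / real n ^ l" by (rule divide_right_mono[OF fm]) simp
      also have "\<dots> \<le> real (falling m l) / real N" using Nle Npos by (simp add: frac_le)
      finally have "y / 2 \<le> real (falling m l) / real N" .
      then have "y / 2 * \<mu> \<le> real (falling m l) / real N * \<mu>" using mu by (intro mult_right_mono) auto
      moreover have "y / 2 * \<mu> = \<nu>" unfolding y_def using mu by simp
      ultimately have "\<nu> \<le> real (falling m l) / real N * \<mu>" by linarith
      then show ?thesis unfolding N_def \<mu>_def cVF cV .
    qed
    obtain G where G: "kgraph k V G" "\<bar>t_inj VF EF V G - \<alpha>\<bar> \<le> 1 / real (card V)"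
      "card (G - H \<union> (H - G)) \<le> m choose k"
      using core[OF kF kH False a tH, of m] mn lm cVF cV n0 step q Npos N_def by auto
    have "real (m choose k) \<le> \<delta> * real (n choose k)"
    proof -
      have "n * (m choose k) \<le> m * (n choose k)" using binom_ratio[of k m n] k2 mn by simp
      then have "real (n * (m choose k)) \<le> real (m * (n choose k))"
        by (simp only: of_nat_le_iff)
      then have "real n * real (m choose k) \<le> real m * real (n choose k)"
        by simp
      also have "\<dots> \<le> (\<delta> * real n) * real (n choose k)" using m1 by (intro mult_right_mono) auto
      finally show ?thesis using n0 by (simp add: mult.commute mult.left_commute)
    qed
    then show ?thesis using G cV unfolding \<delta>_def y_def \<mu>_def
      by (intro exI[of _ G]) auto
  qed
qed




lemma f2_mono:
  fixes x y z x' y' z' :: real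
  assumes "0 < x" "0 < z" "x \<le> x'" "z \<le> z'"
  shows "min x 1 * (min z 1)^2 * 2 powr (- 1 / min z 1) / 8 \<le> min x' 1 * (min z' 1)^2 * 2 powr (- 1 / min z' 1) / 8"
proof -
  have a: "min x 1 \<le> min x' 1" using assms by auto
  have b: "(min z 1)^2 \<le> (min z' 1)^2" using assms by (intro power_mono) auto
  have c: "2 powr (- 1 / min z 1) \<le> 2 powr (- 1 / min z' 1)"
  proof (rule powr_mono)
    have "1 / min z' 1 \<le> 1 / min z 1" using assms by (intro divide_left_mono) auto
    then show "- 1 / min z 1 \<le> - 1 / min z' 1" by simp
  qed simp
  have "min x 1 * (min z 1)^2 \<le> min x' 1 * (min z' 1)^2"
    using a b assms by (intro mult_mono) auto
  then have "min x 1 * (min z 1)^2 * 2 powr (- 1 / min z 1) \<le> min x' 1 * (min z' 1)^2 * 2 powr (- 1 / min z' 1)"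
    using c assms by (intro mult_mono) auto
  then show ?thesis by simp
qed

theorem proposition11p2:
  shows "\<exists>(f1 :: real \<Rightarrow> real \<Rightarrow> real) (f2 :: real \<Rightarrow> real \<Rightarrow> real \<Rightarrow> real).
    (\<forall>a b. 0 < a \<longrightarrow> 0 < b \<longrightarrow> 0 < f1 a b) \<and>
    (\<forall>a b a' b'. 0 < a \<longrightarrow> 0 < b \<longrightarrow> a \<le> a' \<longrightarrow> b \<le> b' \<longrightarrow> f1 a b \<le> f1 a' b') \<and>
    (\<forall>x y z. 0 < x \<longrightarrow> 0 < y \<longrightarrow> 0 < z \<longrightarrow> 0 < f2 x y z) \<and>
    (\<forall>x y z x' y' z'. 0 < x \<longrightarrow> 0 < y \<longrightarrow> 0 < z \<longrightarrow> x \<le> x' \<longrightarrow> y \<le> y' \<longrightarrow> z \<le> z' \<longrightarrow>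
        f2 x y z \<le> f2 x' y' z') \<and>
    (\<forall>(\<alpha>::real) (\<nu>::real) (k::nat) (l::nat) (n::nat)
       (VF::nat set) (EF::nat set set) (V::nat set) (H::nat set set).
       0 < \<alpha> \<longrightarrow> \<alpha> < 1 \<longrightarrow> 2 \<le> k \<longrightarrow> 1 \<le> l \<longrightarrow> 0 < n \<longrightarrow> 0 < \<nu> \<longrightarrow>
       \<nu> \<le> f1 \<alpha> (1 - \<alpha>) \<longrightarrow>
       1 / real n \<le> f2 \<nu> (1 / real k) (1 / real l) \<longrightarrow>
       kgraph k VF EF \<longrightarrow> card VF = l \<longrightarrow>
       kgraph k V H \<longrightarrow> card V = n \<longrightarrow>
       \<bar>t_inj VF EF V H - \<alpha>\<bar> \<le> \<nu> \<longrightarrow>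
       (\<exists>G. kgraph k V G \<and> \<bar>t_inj VF EF V G - \<alpha>\<bar> \<le> 1 / real n \<and>
            real (card (G - H \<union> (H - G)))
              \<le> (2 * \<nu> / min \<alpha> (1 - \<alpha>)) powr (1 / real l) * real (n choose k)))"
proof (intro exI conjI)
  let ?f1 = "\<lambda>a b::real. min a b / 4"
  let ?f2 = "\<lambda>x y z::real. min x 1 * (min z 1)^2 * 2 powr (- 1 / min z 1) / 8"
  show "\<forall>a b. 0 < a \<longrightarrow> 0 < b \<longrightarrow> 0 < ?f1 a b" by auto
  show "\<forall>a b a' b'. 0 < a \<longrightarrow> 0 < b \<longrightarrow> a \<le> a' \<longrightarrow> b \<le> b' \<longrightarrow> ?f1 a b \<le> ?f1 a' b'" by auto
  show "\<forall>x y z. 0 < x \<longrightarrow> 0 < y \<longrightarrow> 0 < z \<longrightarrow> 0 < ?f2 x y z" by auto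
  show "\<forall>x y z x' y' z'. 0 < x \<longrightarrow> 0 < y \<longrightarrow> 0 < z \<longrightarrow> x \<le> x' \<longrightarrow> y \<le> y' \<longrightarrow> z \<le> z' \<longrightarrow>
        ?f2 x y z \<le> ?f2 x' y' z'" using f2_mono by blast
  show "\<forall>(\<alpha>::real) (\<nu>::real) (k::nat) (l::nat) (n::nat)
       (VF::nat set) (EF::nat set set) (V::nat set) (H::nat set set).
       0 < \<alpha> \<longrightarrow> \<alpha> < 1 \<longrightarrow> 2 \<le> k \<longrightarrow> 1 \<le> l \<longrightarrow> 0 < n \<longrightarrow> 0 < \<nu> \<longrightarrow>
       \<nu> \<le> ?f1 \<alpha> (1 - \<alpha>) \<longrightarrow>
       1 / real n \<le> ?f2 \<nu> (1 / real k) (1 / real l) \<longrightarrow>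
       kgraph k VF EF \<longrightarrow> card VF = l \<longrightarrow>
       kgraph k V H \<longrightarrow> card V = n \<longrightarrow>
       \<bar>t_inj VF EF V H - \<alpha>\<bar> \<le> \<nu> \<longrightarrow>
       (\<exists>G. kgraph k V G \<and> \<bar>t_inj VF EF V G - \<alpha>\<bar> \<le> 1 / real n \<and>
            real (card (G - H \<union> (H - G)))
              \<le> (2 * \<nu> / min \<alpha> (1 - \<alpha>)) powr (1 / real l) * real (n choose k))"
    by (intro allI impI, rule main) assumption+
qed


end
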